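(* In the continuous-time scaled model described in the context, if $x_0=y_0>0$, then $\tau_N\to T$ in probability as $N\to\infty$.
   Context: Continuous-time model: $(X_t,Y_t)_{t\ge0}$ is a pure-jump Markov process with nonnegative integer values. Jumps occur at the times of a rate-one Poisson process $(\mathcal N_t)$. At a jump time $t'$, with $q=X_{t'-}/(X_{t'-}+Y_{t'-})$: with probability $q$, $Y$ decreases by $1$; with probability $1-q$, $X$ decreases by $1$. The game stops when one coordinate reaches $0$. Scaling: $x^N_t=N^{-1}X_{Nt}$, $y^N_t=N^{-1}Y_{Nt}$, with $\lim_N x^N_0=x_0$, $\lim_N y^N_0=y_0$; $T_N=x^N_0+y^N_0$, $T=x_0+y_0$; the scaled ruin time is $\tau_N=\inf\{t>0: x^N_t\wedge y^N_t=0\}$. *)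

theory Defs
  imports "HOL-Probability.Probability"
begin

text \<open>A sample point is a pair (E, U): E i are the i.i.d. Exp(1) inter-arrival times of the
  rate-one Poisson clock, U i are i.i.d. Uniform[0,1] variables deciding the i-th jump
  (Y decreases iff U < q, which has probability q).\<close>

definition game_space :: "((nat \<Rightarrow> real) \<times> (nat \<Rightarrow> real)) measure" where
  "game_space =
     (PiM UNIV (\<lambda>_::nat. density lborel (exponential_density 1)))
     \<Otimes>\<^sub>M (PiM UNIV (\<lambda>_::nat. uniform_measure lborel {0..1::real}))"

definition game_step :: "real \<Rightarrow> nat \<times> nat \<Rightarrow> nat \<times> nat" where
  "game_step u s = (case s of (a, b) \<Rightarrow>
     if a = 0 \<or> b = 0 then (a, b)
     else if u < real a / (real a + real b) then (a, b - 1) else (a - 1, b))"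

fun jump_chain :: "nat \<times> nat \<Rightarrow> (nat \<Rightarrow> real) \<Rightarrow> nat \<Rightarrow> nat \<times> nat" where
  "jump_chain s0 U 0 = s0"
| "jump_chain s0 U (Suc k) = game_step (U k) (jump_chain s0 U k)"

definition arrival :: "(nat \<Rightarrow> real) \<Rightarrow> nat \<Rightarrow> real" where
  "arrival E k = (\<Sum>i<k. E i)"

definition poisson_count :: "(nat \<Rightarrow> real) \<Rightarrow> real \<Rightarrow> nat" where
  "poisson_count E t = card {k. 1 \<le> k \<and> arrival E k \<le> t}"

definition X_proc :: "nat \<times> nat \<Rightarrow> (nat \<Rightarrow> real) \<times> (nat \<Rightarrow> real) \<Rightarrow> real \<Rightarrow> nat" where
  "X_proc s0 \<omega> t = fst (jump_chain s0 (snd \<omega>) (poisson_count (fst \<omega>) t))"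

definition Y_proc :: "nat \<times> nat \<Rightarrow> (nat \<Rightarrow> real) \<times> (nat \<Rightarrow> real) \<Rightarrow> real \<Rightarrow> nat" where
  "Y_proc s0 \<omega> t = snd (jump_chain s0 (snd \<omega>) (poisson_count (fst \<omega>) t))"

definition x_scaled :: "nat \<Rightarrow> nat \<times> nat \<Rightarrow> (nat \<Rightarrow> real) \<times> (nat \<Rightarrow> real) \<Rightarrow> real \<Rightarrow> real" where
  "x_scaled N s0 \<omega> t = real (X_proc s0 \<omega> (real N * t)) / real N"

definition y_scaled :: "nat \<Rightarrow> nat \<times> nat \<Rightarrow> (nat \<Rightarrow> real) \<times> (nat \<Rightarrow> real) \<Rightarrow> real \<Rightarrow> real" where
  "y_scaled N s0 \<omega> t = real (Y_proc s0 \<omega> (real N * t)) / real N"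

definition ruin_time :: "nat \<Rightarrow> nat \<times> nat \<Rightarrow> (nat \<Rightarrow> real) \<times> (nat \<Rightarrow> real) \<Rightarrow> real" where
  "ruin_time N s0 \<omega> = Inf {t. t > 0 \<and> min (x_scaled N s0 \<omega> t) (y_scaled N s0 \<omega> t) = 0}"

end

theory Submission
  imports Defs
begin


lemma nn_step:
  fixes M :: "nat \<Rightarrow> 'a measure"
  assumes Pm: "\<And>i. prob_space (M i)"
  assumes h[measurable]: "h \<in> borel_measurable (PiM {..<n} M \<Otimes>\<^sub>M M n)"
  shows "(\<integral>\<^sup>+x. h (restrict x {..<n}, x n) \<partial>PiM UNIV M) =
         (\<integral>\<^sup>+x. (\<integral>\<^sup>+y. h (restrict x {..<n}, y) \<partial>M n) \<partial>PiM UNIV M)"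
proof -
  interpret product_prob_space M UNIV using Pm by (simp add: product_prob_space_def product_sigma_finite_def prob_space_imp_sigma_finite product_prob_space_axioms_def)
  interpret Mn: prob_space "M n" using Pm by auto
  define f where "f z = h (restrict z {..<n}, z n)" for z
  have fm[measurable]: "f \<in> borel_measurable (PiM (insert n {..<n}) M)"
    unfolding f_def by measurable
  have "(\<integral>\<^sup>+x. h (restrict x {..<n}, x n) \<partial>PiM UNIV M) = (\<integral>\<^sup>+x. f (restrict x (insert n {..<n})) \<partial>PiM UNIV M)"
    by (simp add: f_def)
  also have "\<dots> = (\<integral>\<^sup>+z. f z \<partial>distr (PiM UNIV M) (PiM (insert n {..<n}) M) (\<lambda>x. restrict x (insert n {..<n})))"
    by (intro nn_integral_distr[symmetric] measurable_restrict_subset fm) auto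
  also have "\<dots> = (\<integral>\<^sup>+z. f z \<partial>PiM (insert n {..<n}) M)"
    by (subst distr_PiM_restrict_finite) auto
  also have "\<dots> = (\<integral>\<^sup>+z. (\<integral>\<^sup>+y. f (z(n:=y)) \<partial>M n) \<partial>PiM {..<n} M)"
    by (rule product_nn_integral_insert) auto
  also have "\<dots> = (\<integral>\<^sup>+z. (\<integral>\<^sup>+y. h (z, y) \<partial>M n) \<partial>PiM {..<n} M)"
  proof (rule nn_integral_cong)
    fix z assume z: "z \<in> space (PiM {..<n} M)"
    have "restrict (z(n := y)) {..<n} = z" for y
      using z by (auto simp: space_PiM PiE_def extensional_def restrict_def fun_eq_iff)
    then show "(\<integral>\<^sup>+y. f (z(n:=y)) \<partial>M n) = (\<integral>\<^sup>+y. h (z, y) \<partial>M n)"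
      by (simp add: f_def)
  qed
  also have "\<dots> = (\<integral>\<^sup>+z. (\<integral>\<^sup>+y. h (z, y) \<partial>M n) \<partial>distr (PiM UNIV M) (PiM {..<n} M) (\<lambda>x. restrict x {..<n}))"
    by (subst distr_PiM_restrict_finite) auto
  also have "\<dots> = (\<integral>\<^sup>+x. (\<integral>\<^sup>+y. h (restrict x {..<n}, y) \<partial>M n) \<partial>PiM UNIV M)"
    by (intro nn_integral_distr measurable_restrict_subset M.borel_measurable_nn_integral_fst h) auto
  finally show ?thesis .
qed



abbreviation "Mexp \<equiv> density lborel (exponential_density 1)"
abbreviation "Munif \<equiv> uniform_measure lborel {0..1::real}"
abbreviation "PE \<equiv> PiM (UNIV::nat set) (\<lambda>_. Mexp)"
abbreviation "PU \<equiv> PiM (UNIV::nat set) (\<lambda>_. Munif)"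

lemma game_space_eq: "game_space = PE \<Otimes>\<^sub>M PU" by (simp add: game_space_def)

lemma mE[measurable]: "(\<lambda>\<omega>. fst \<omega> i) \<in> borel_measurable game_space"
  unfolding game_space_def by measurable

lemma mU[measurable]: "(\<lambda>\<omega>. snd \<omega> i) \<in> borel_measurable game_space"
  unfolding game_space_def by measurable

lemma mU'[measurable]: "(\<lambda>U. U i) \<in> borel_measurable PU"
  by measurable

lemma mE'[measurable]: "(\<lambda>U. U i) \<in> borel_measurable PE"
  by measurable

lemma m_arr[measurable]: "(\<lambda>\<omega>. arrival (fst \<omega>) k) \<in> borel_measurable game_space"
  unfolding arrival_def by measurable

lemma m_arr'[measurable]: "(\<lambda>E. arrival E k) \<in> borel_measurable PE"
  unfolding arrival_def by measurable

lemma m_step: "(\<lambda>U. game_step (U n) s) \<in> measurable M (count_space UNIV)"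
  if [measurable]: "(\<lambda>U. U n) \<in> borel_measurable M" for M
  unfolding game_step_def by (cases s) measurable

lemma m_chain: "(\<lambda>U. jump_chain s0 U n) \<in> measurable M (count_space UNIV)"
  if [measurable]: "\<And>i. (\<lambda>U. U i) \<in> borel_measurable M" for M
proof (induction n)
  case 0 then show ?case by simp
next
  case (Suc n)
  have "(\<lambda>U. (\<lambda>s U. game_step (U n) s) (jump_chain s0 U n) U) \<in> measurable M (count_space UNIV)"
    by (rule measurable_compose_countable[OF m_step Suc]) simp
  then show ?case by simp
qed

lemma m_chain_g: "(\<lambda>\<omega>. jump_chain s0 (snd \<omega>) n) \<in> measurable game_space (count_space UNIV)"
  unfolding game_space_def
  by (rule measurable_compose[OF measurable_snd m_chain[of PU]]) measurable



lemma card_lt_meas: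
  fixes P :: "'a \<Rightarrow> nat \<Rightarrow> bool" and m n :: nat
  assumes P: "\<And>k. {\<omega>\<in>space M. P \<omega> k} \<in> sets M"
  shows "{\<omega>\<in>space M. card {k. k<m \<and> P \<omega> k} = n} \<in> sets M"
proof (induction m arbitrary: n)
  case 0 then show ?case by (cases n) auto
next
  case (Suc m)
  have c: "card {k. k<Suc m \<and> P \<omega> k} = card {k. k<m \<and> P \<omega> k} + (if P \<omega> m then 1 else 0)" for \<omega>
  proof -
    have "{k. k<Suc m \<and> P \<omega> k} = {k. k<m \<and> P \<omega> k} \<union> (if P \<omega> m then {m} else {})"
      by (auto simp: less_Suc_eq)
    then show ?thesis by (auto simp: card_insert_if)
  qed
  have "{\<omega>\<in>space M. card {k. k<Suc m \<and> P \<omega> k} = n} =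
     ({\<omega>\<in>space M. P \<omega> m} \<inter> (if n = 0 then {} else {\<omega>\<in>space M. card {k. k<m \<and> P \<omega> k} = n - 1}))
     \<union> ((space M - {\<omega>\<in>space M. P \<omega> m}) \<inter> {\<omega>\<in>space M. card {k. k<m \<and> P \<omega> k} = n})"
    by (auto simp: c)
  also have "\<dots> \<in> sets M" using Suc P by auto
  finally show ?case .
qed

lemma card_meas:
  fixes P :: "'a \<Rightarrow> nat \<Rightarrow> bool" and n :: nat
  assumes P: "\<And>k. {\<omega>\<in>space M. P \<omega> k} \<in> sets M"
  shows "{\<omega>\<in>space M. card {k. P \<omega> k} = n} \<in> sets M"
proof -
  have fin: "finite {k. P \<omega> k} \<longleftrightarrow> (\<exists>m. \<forall>k\<ge>m. \<not> P \<omega> k)" for \<omega>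
  proof
    assume "finite {k. P \<omega> k}"
    then obtain m where "\<forall>k\<in>{k. P \<omega> k}. k < m" using finite_nat_bounded by blast
    then show "\<exists>m. \<forall>k\<ge>m. \<not> P \<omega> k" using leD by blast
  next
    assume "\<exists>m. \<forall>k\<ge>m. \<not> P \<omega> k"
    then obtain m where "\<forall>k\<ge>m. \<not> P \<omega> k" by blast
    then have "{k. P \<omega> k} \<subseteq> {..<m}" by (auto simp: not_le[symmetric])
    then show "finite {k. P \<omega> k}" using finite_subset by blast
  qed
  have eq: "card {k. P \<omega> k} = n \<longleftrightarrow>
     (\<exists>m. (\<forall>k. m \<le> k \<longrightarrow> \<not> P \<omega> k) \<and> card {k. k<m \<and> P \<omega> k} = n)
     \<or> (n = 0 \<and> (\<forall>m. \<exists>k. m \<le> k \<and> P \<omega> k))" for \<omega>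
  proof (cases "finite {k. P \<omega> k}")
    case True
    then obtain m where m: "\<forall>k\<ge>m. \<not> P \<omega> k" using fin by blast
    have e: "{k. k<m' \<and> P \<omega> k} = {k. P \<omega> k}" if "\<forall>k. m' \<le> k \<longrightarrow> \<not> P \<omega> k" for m'
      using that by (auto simp: not_le[symmetric])
    show ?thesis using e m by metis
  next
    case False
    then show ?thesis using fin by auto
  qed
  have [measurable]: "Measurable.pred M (\<lambda>\<omega>. P \<omega> k)" for k using P by (simp add: pred_def)
  have [measurable]: "Measurable.pred M (\<lambda>\<omega>. card {k. k<m \<and> P \<omega> k} = n')" for m n'
    using card_lt_meas[OF P] by (simp add: pred_def)
  have "Measurable.pred M (\<lambda>\<omega>. card {k. P \<omega> k} = n)" unfolding eq by measurable
  then show ?thesis by (simp add: pred_def)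
qed



lemma exists_char:
  fixes a :: "nat \<Rightarrow> real" and Z :: "nat \<Rightarrow> bool" and r c :: real
  assumes r: "r > 0" and mono: "\<And>n. Z n \<Longrightarrow> Z (Suc n)"
  shows "(\<exists>t. 0 < t \<and> t < c \<and> Z (card {k. 1 \<le> k \<and> a k \<le> r * t})) \<longleftrightarrow>
    (\<exists>q::rat. 0 < real_of_rat q \<and> real_of_rat q < c \<and> Z (card {k. 1 \<le> k \<and> a k \<le> r * real_of_rat q})) \<or>
    (\<exists>j. 0 < a j / r \<and> a j / r < c \<and> Z (card {k. 1 \<le> k \<and> a k \<le> r * (a j / r)}))"
    (is "?L \<longleftrightarrow> ?R1 \<or> ?R2")
proof
  assume ?L
  then obtain t0 where t0: "0 < t0" "t0 < c" "Z (card {k. 1 \<le> k \<and> a k \<le> r * t0})" by blast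
  define A where "A = {k. 1 \<le> k \<and> a k \<le> r * t0}"
  have rat_between: "\<exists>q::rat. x < real_of_rat q \<and> real_of_rat q < y" if xy: "x < y" for x y
  proof -
    obtain q where "q \<in> \<rat>" "x < q" "q < y" using Rats_dense_in_real[OF xy] by auto
    then show ?thesis by (metis Rats_cases)
  qed
  show "?R1 \<or> ?R2"
  proof (cases "Z 0")
    case True
    have allZ: "Z n" for n by (induction n) (use True mono in auto)
    obtain q::rat where "0 < real_of_rat q" "real_of_rat q < c" using rat_between[of 0 c] t0 by auto
    then show ?thesis using allZ by blast
  next
    case False
    have finA: "finite A"
    proof (rule ccontr)
      assume "infinite A" then have "card A = 0" by simp
      then show False using t0(3) False unfolding A_def by simp
    qed
    show ?thesis
    proof (cases "\<exists>k\<in>A. a k = r * t0")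
      case True
      then obtain j where j: "j \<in> A" "a j = r * t0" by blast
      then have "a j / r = t0" using r by simp
      then show ?thesis using t0 by (intro disjI2 exI[of _ j]) simp
    next
      case False
      define m where "m = Max (insert 0 (a ` A))"
      have m0: "0 \<le> m" unfolding m_def using finA by simp
      have mA: "a k \<le> m" if "k \<in> A" for k unfolding m_def using finA that by simp
      have mlt: "m < r * t0"
      proof -
        have "m \<in> insert 0 (a ` A)" unfolding m_def using finA by (intro Max_in) auto
        then show ?thesis using False r t0(1) A_def by auto
      qed
      obtain q::rat where q: "m / r < real_of_rat q" "real_of_rat q < t0"
        using rat_between[of "m/r" t0] mlt r by (auto simp: field_simps)
      have rq: "m < r * real_of_rat q" "r * real_of_rat q < r * t0"
        using q r by (auto simp: field_simps)
      have "{k. 1 \<le> k \<and> a k \<le> r * real_of_rat q} = A"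
        unfolding A_def using rq mA A_def by force
      moreover have "0 < real_of_rat q" using q m0 r by (smt (verit) divide_nonneg_pos)
      ultimately show ?thesis using t0 q unfolding A_def by (intro disjI1) (metis order.strict_trans)
    qed
  qed
next
  assume "?R1 \<or> ?R2"
  then show ?L by blast
qed



definition Zs :: "nat \<times> nat \<Rightarrow> (nat \<Rightarrow> real) \<Rightarrow> nat \<Rightarrow> bool" where
  "Zs s0 U n \<longleftrightarrow> fst (jump_chain s0 U n) = 0 \<or> snd (jump_chain s0 U n) = 0"

lemma Zs_mono: "Zs s0 U n \<Longrightarrow> Zs s0 U (Suc n)"
  by (cases "jump_chain s0 U n") (auto simp: Zs_def game_step_def)

lemma Zs_meas[measurable]: "Measurable.pred game_space (\<lambda>\<omega>. Zs s0 (snd \<omega>) n)"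
  unfolding Zs_def using m_chain_g[of s0 n] by measurable

lemma ruin_set_eq:
  assumes "N > 0"
  shows "{t. t > 0 \<and> min (x_scaled N s0 \<omega> t) (y_scaled N s0 \<omega> t) = 0} =
         {t. t > 0 \<and> Zs s0 (snd \<omega>) (card {k. 1 \<le> k \<and> arrival (fst \<omega>) k \<le> real N * t})}"
proof -
  have h: "min (real a / real N) (real b / real N) = 0 \<longleftrightarrow> a = 0 \<or> b = 0" for a b :: nat
    using assms by (auto simp: min_def field_simps)
  show ?thesis by (simp add: x_scaled_def y_scaled_def X_proc_def Y_proc_def poisson_count_def Zs_def h)
qed

lemma Zcard_meas:
  assumes [measurable]: "f \<in> borel_measurable game_space"
  shows "Measurable.pred game_space (\<lambda>\<omega>. Zs s0 (snd \<omega>) (card {k. 1 \<le> k \<and> arrival (fst \<omega>) k \<le> r * f \<omega>}))"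
proof -
  have [measurable]: "Measurable.pred game_space (\<lambda>\<omega>. card {k. 1 \<le> k \<and> arrival (fst \<omega>) k \<le> r * f \<omega>} = n)" for n
    using card_meas[of game_space "\<lambda>\<omega> k. 1 \<le> k \<and> arrival (fst \<omega>) k \<le> r * f \<omega>" n]
    by (simp add: pred_def)
  have eq: "Zs s0 (snd \<omega>) (card {k. 1 \<le> k \<and> arrival (fst \<omega>) k \<le> r * f \<omega>}) \<longleftrightarrow>
     (\<exists>n. card {k. 1 \<le> k \<and> arrival (fst \<omega>) k \<le> r * f \<omega>} = n \<and> Zs s0 (snd \<omega>) n)" for \<omega> by auto
  show ?thesis unfolding eq by measurable
qed

lemma W_meas:
  assumes r: "r > 0"
  shows "Measurable.pred game_space (\<lambda>\<omega>. \<exists>t. 0 < t \<and> t < c \<and> Zs s0 (snd \<omega>) (card {k. 1 \<le> k \<and> arrival (fst \<omega>) k \<le> r * t}))"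
proof -
  have eq: "(\<exists>t. 0 < t \<and> t < c \<and> Zs s0 (snd \<omega>) (card {k. 1 \<le> k \<and> arrival (fst \<omega>) k \<le> r * t})) \<longleftrightarrow>
    (\<exists>q::rat. 0 < real_of_rat q \<and> real_of_rat q < c \<and> Zs s0 (snd \<omega>) (card {k. 1 \<le> k \<and> arrival (fst \<omega>) k \<le> r * real_of_rat q})) \<or>
    (\<exists>j. 0 < arrival (fst \<omega>) j / r \<and> arrival (fst \<omega>) j / r < c \<and> Zs s0 (snd \<omega>) (card {k. 1 \<le> k \<and> arrival (fst \<omega>) k \<le> r * (arrival (fst \<omega>) j / r)}))" for \<omega>
    using exists_char[where Z="Zs s0 (snd \<omega>)" and a="arrival (fst \<omega>)" and c=c and r=r, OF r Zs_mono] .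
  have m1[measurable]: "Measurable.pred game_space (\<lambda>\<omega>. Zs s0 (snd \<omega>) (card {k. 1 \<le> k \<and> arrival (fst \<omega>) k \<le> r * real_of_rat q}))" for q
    using Zcard_meas[of "\<lambda>_. real_of_rat q"] by simp
  have m2[measurable]: "Measurable.pred game_space (\<lambda>\<omega>. Zs s0 (snd \<omega>) (card {k. 1 \<le> k \<and> arrival (fst \<omega>) k \<le> r * (arrival (fst \<omega>) j / r)}))" for j
  proof -
    have fm: "(\<lambda>\<omega>. arrival (fst \<omega>) j / r) \<in> borel_measurable game_space" by measurable
    show ?thesis using Zcard_meas[OF fm, where r=r] .
  qed
  show ?thesis unfolding eq by measurable
qed

lemma ruin_meas: "ruin_time N s0 \<in> borel_measurable game_space"
proof (cases "N = 0")
  case True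
  then have "ruin_time N s0 = (\<lambda>_. Inf {t::real. t > 0})"
    by (auto simp: ruin_time_def x_scaled_def y_scaled_def fun_eq_iff)
  then show ?thesis by simp
next
  case False
  then have N: "N > 0" by simp
  define T where "T \<omega> = {t. t > 0 \<and> Zs s0 (snd \<omega>) (card {k. 1 \<le> k \<and> arrival (fst \<omega>) k \<le> real N * t})}" for \<omega>
  have rt: "ruin_time N s0 \<omega> = Inf (T \<omega>)" for \<omega>
    unfolding ruin_time_def ruin_set_eq[OF N] T_def ..
  have [measurable]: "Measurable.pred game_space (\<lambda>\<omega>. \<exists>t. 0 < t \<and> t < c \<and> Zs s0 (snd \<omega>) (card {k. 1 \<le> k \<and> arrival (fst \<omega>) k \<le> real N * t}))" for c
    using W_meas[of "real N" c s0] N by simp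
  have key: "Inf (T \<omega>) < c \<longleftrightarrow>
     (\<exists>t. 0 < t \<and> t < c \<and> Zs s0 (snd \<omega>) (card {k. 1 \<le> k \<and> arrival (fst \<omega>) k \<le> real N * t})) \<or>
     ((\<forall>n::nat. \<not> (\<exists>t. 0 < t \<and> t < real n \<and> Zs s0 (snd \<omega>) (card {k. 1 \<le> k \<and> arrival (fst \<omega>) k \<le> real N * t}))) \<and> Inf ({}::real set) < c)" for \<omega> c
  proof (cases "T \<omega> = {}")
    case True
    have ne: "\<forall>t. 0 < t \<longrightarrow> \<not> Zs s0 (snd \<omega>) (card {k. 1 \<le> k \<and> arrival (fst \<omega>) k \<le> real N * t})"
      using True unfolding T_def by auto
    show ?thesis using ne True by auto
  next
    case False
    have bdd: "bdd_below (T \<omega>)" unfolding T_def by (rule bdd_belowI[of _ 0]) auto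
    obtain t where t: "t \<in> T \<omega>" using False by blast
    obtain n::nat where "t < real n" using reals_Archimedean2 by blast
    then have nn: "\<exists>n::nat. \<exists>t. 0 < t \<and> t < real n \<and> Zs s0 (snd \<omega>) (card {k. 1 \<le> k \<and> arrival (fst \<omega>) k \<le> real N * t})"
      using t unfolding T_def by blast
    show ?thesis using cInf_less_iff[OF False bdd, of c] nn unfolding T_def by auto
  qed
  show ?thesis
    unfolding borel_measurable_iff_less rt
  proof
    fix c
    have "Measurable.pred game_space (\<lambda>\<omega>. Inf (T \<omega>) < c)" unfolding key by measurable
    then show "{w \<in> space game_space. Inf (T w) < c} \<in> sets game_space" by (simp add: pred_def)
  qed
qed



lemma m_chain': "(\<lambda>U. jump_chain s0 U n) \<in> measurable M (count_space UNIV)"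
  if "\<And>i. i < n \<Longrightarrow> (\<lambda>U. U i) \<in> borel_measurable M" for M
  using that
proof (induction n)
  case 0 then show ?case by simp
next
  case (Suc n)
  have [measurable]: "(\<lambda>U. U n) \<in> borel_measurable M" using Suc.prems by simp
  have "(\<lambda>U. (\<lambda>s U. game_step (U n) s) (jump_chain s0 U n) U) \<in> measurable M (count_space UNIV)"
    by (rule measurable_compose_countable[OF m_step Suc.IH]) (use Suc.prems in auto)
  then show ?case by simp
qed

lemma chain_cong: "(\<And>i. i < k \<Longrightarrow> U i = V i) \<Longrightarrow> jump_chain s0 U k = jump_chain s0 V k"
  by (induction k) auto

lemma chain_bound: "fst (jump_chain s0 U k) \<le> fst s0 \<and> snd (jump_chain s0 U k) \<le> snd s0"
  by (induction k) (auto simp: game_step_def split: prod.splits)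

definition msq :: "nat \<times> nat \<Rightarrow> real" where
  "msq s = (real (fst s) ^ 2 - real (snd s) ^ 2) ^ 2"

lemma prob_Munif: "prob_space Munif"
  by (rule prob_space_uniform_measure) simp_all

lemma Munif_lt: "0 \<le> q \<Longrightarrow> q \<le> 1 \<Longrightarrow> emeasure Munif {..<q} = ennreal q"
proof -
  assume q: "0 \<le> q" "q \<le> 1"
  have e: "{0..1::real} \<inter> {..<q} = {0..<q}" using q by auto
  have "emeasure Munif {..<q} = emeasure lborel ({0..1::real} \<inter> {..<q}) / emeasure lborel {0..1::real}"
    by (rule emeasure_uniform_measure) simp_all
  also have "\<dots> = ennreal q" unfolding e using q by (simp add: divide_ennreal_def)
  finally show ?thesis .
qed

lemma Munif_ge: "0 \<le> q \<Longrightarrow> q \<le> 1 \<Longrightarrow> emeasure Munif {q..} = ennreal (1 - q)"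
proof -
  assume q: "0 \<le> q" "q \<le> 1"
  have e: "{0..1::real} \<inter> {q..} = {q..1}" using q by auto
  have "emeasure Munif {q..} = emeasure lborel ({0..1::real} \<inter> {q..}) / emeasure lborel {0..1::real}"
    by (rule emeasure_uniform_measure) simp_all
  also have "\<dots> = ennreal (1 - q)" unfolding e using q by (simp add: divide_ennreal_def)
  finally show ?thesis .
qed

lemma alg_ineq:
  fixes a b C :: real
  assumes a: "1 \<le> a" and b: "1 \<le> b" and Ca: "(2*a-1)^2 \<le> C" and Cb: "(2*b-1)^2 \<le> C"
  shows "a/(a+b) * (a^2 - (b-1)^2)^2 + (1 - a/(a+b)) * ((a-1)^2 - b^2)^2 \<le> (a^2-b^2)^2 + C"
proof -
  have ab: "a + b > 0" using a b by simp
  have id: "a * (a^2 - (b-1)^2)^2 + b * ((a-1)^2 - b^2)^2 =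
     (a+b)*(a^2-b^2)^2 - 2*(a+b)*(a-b)^2 + a*(2*b-1)^2 + b*(2*a-1)^2"
    by (simp add: power2_eq_square algebra_simps)
  have "a*(2*b-1)^2 + b*(2*a-1)^2 \<le> a*C + b*C"
    using a b Ca Cb by (intro add_mono mult_left_mono) auto
  moreover have "0 \<le> 2*(a+b)*(a-b)^2" using ab by simp
  ultimately have "a * (a^2 - (b-1)^2)^2 + b * ((a-1)^2 - b^2)^2 \<le> (a+b)*((a^2-b^2)^2 + C)"
    unfolding id by (simp add: algebra_simps)
  moreover have "a/(a+b) * (a^2 - (b-1)^2)^2 + (1 - a/(a+b)) * ((a-1)^2 - b^2)^2
     = (a * (a^2 - (b-1)^2)^2 + b * ((a-1)^2 - b^2)^2) / (a+b)"
  proof -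
    have "1 - a/(a+b) = b/(a+b)" using ab by (simp add: field_simps)
    then show ?thesis by (simp add: add_divide_distrib)
  qed
  ultimately show ?thesis using ab by (simp add: divide_le_eq mult.commute)
qed

lemma inner_step:
  fixes s :: "nat \<times> nat" and S :: nat
  assumes S: "fst s + snd s \<le> S"
  shows "(\<integral>\<^sup>+u. ennreal (msq (game_step u s)) \<partial>Munif) \<le> ennreal (msq s + (2 * real S)^2)"
proof (cases "fst s = 0 \<or> snd s = 0")
  case True
  then have "game_step u s = s" for u by (cases s) (auto simp: game_step_def)
  then have "(\<integral>\<^sup>+u. ennreal (msq (game_step u s)) \<partial>Munif) = ennreal (msq s)"
    using prob_space.emeasure_space_1[OF prob_Munif] by simp
  then show ?thesis by (simp add: msq_def)
next
  case False
  obtain a b where s: "s = (a, b)" by (cases s)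
  with False have a: "a \<ge> 1" and b: "b \<ge> 1" by auto
  define q where "q = real a / (real a + real b)"
  have q: "0 \<le> q" "q \<le> 1" using a b by (auto simp: q_def)
  define m1 where "m1 = msq (a, b - 1)"
  define m2 where "m2 = msq (a - 1, b)"
  have eq: "ennreal (msq (game_step u s)) = ennreal m1 * indicator {..<q} u + ennreal m2 * indicator {q..} u" for u
    using a b by (auto simp: s game_step_def q_def m1_def m2_def indicator_def)
  have "(\<integral>\<^sup>+u. ennreal (msq (game_step u s)) \<partial>Munif) = ennreal m1 * emeasure Munif {..<q} + ennreal m2 * emeasure Munif {q..}"
  proof -
    have "(\<integral>\<^sup>+u. ennreal m1 * indicator {..<q} u + ennreal m2 * indicator {q..} u \<partial>Munif) =
      (\<integral>\<^sup>+u. ennreal m1 * indicator {..<q} u \<partial>Munif) + (\<integral>\<^sup>+u. ennreal m2 * indicator {q..} u \<partial>Munif)"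
      by (rule nn_integral_add; intro borel_measurable_times_ennreal borel_measurable_const borel_measurable_indicator; simp)
    also have "\<dots> = ennreal m1 * emeasure Munif {..<q} + ennreal m2 * emeasure Munif {q..}"
      by (subst nn_integral_cmult_indicator, simp)+ (rule refl)
    finally show ?thesis unfolding eq .
  qed
  also have "\<dots> = ennreal (q * m1 + (1 - q) * m2)"
  proof -
    have m0: "0 \<le> m1" "0 \<le> m2" by (simp_all add: m1_def m2_def msq_def)
    have "ennreal m1 * emeasure Munif {..<q} + ennreal m2 * emeasure Munif {q..} = ennreal m1 * ennreal q + ennreal m2 * ennreal (1 - q)"
      by (simp only: Munif_lt[OF q] Munif_ge[OF q])
    also have "\<dots> = ennreal (m1 * q) + ennreal (m2 * (1 - q))"
      using m0 q by (simp add: ennreal_mult)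
    also have "\<dots> = ennreal (m1 * q + m2 * (1 - q))"
      using m0 q by (intro ennreal_plus[symmetric]) auto
    finally show ?thesis by (simp add: mult.commute)
  qed
  also have "\<dots> \<le> ennreal (msq s + (2 * real S)^2)"
  proof (rule ennreal_leI)
    have ra: "real (a - 1) = real a - 1" and rb: "real (b - 1) = real b - 1" using a b by auto
    have C: "(2 * real a - 1)^2 \<le> (2 * real S)^2" "(2 * real b - 1)^2 \<le> (2 * real S)^2"
    proof -
      have h: "a \<le> S" "b \<le> S" using S s by auto
      have h1: "2 * real a - 1 \<le> 2 * real S" "0 \<le> 2 * real a - 1" using h a by linarith+
      have h2: "2 * real b - 1 \<le> 2 * real S" "0 \<le> 2 * real b - 1" using h b by linarith+
      show "(2 * real a - 1)^2 \<le> (2 * real S)^2" "(2 * real b - 1)^2 \<le> (2 * real S)^2"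
        using power_mono[OF h1, of 2] power_mono[OF h2, of 2] by auto
    qed
    have e1: "m1 = (real a^2 - (real b - 1)^2)^2" using b by (simp add: m1_def msq_def of_nat_diff)
    have e2: "m2 = ((real a - 1)^2 - real b^2)^2" using a by (simp add: m2_def msq_def of_nat_diff)
    have e3: "msq s = (real a^2 - real b^2)^2" by (simp add: msq_def s)
    have a1: "1 \<le> real a" "1 \<le> real b" using a b by simp_all
    show "q * m1 + (1 - q) * m2 \<le> msq s + (2 * real S)^2"
      using alg_ineq[of "real a" "real b", OF a1 C] unfolding q_def e1 e2 e3 .
  qed
  finally show ?thesis .
qed



lemma prob_PU: "prob_space PU"
  by (rule prob_space_PiM) (rule prob_Munif)

lemma comp_unif: "i \<in> I \<Longrightarrow> (\<lambda>U. U i) \<in> borel_measurable (PiM I (\<lambda>_. Munif))"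
proof -
  assume i: "i \<in> I"
  have "(\<lambda>U. U i) \<in> measurable (PiM I (\<lambda>_. Munif)) Munif"
    by (rule measurable_component_singleton[OF i])
  also have "measurable (PiM I (\<lambda>_. Munif)) Munif = borel_measurable (PiM I (\<lambda>_. Munif))"
    by (rule measurable_cong_sets) simp_all
  finally show ?thesis .
qed

lemma m_step2: "(\<lambda>x. game_step (f x) s) \<in> measurable M (count_space UNIV)"
  if [measurable]: "f \<in> borel_measurable M" for M
  unfolding game_step_def by (cases s) measurable

lemma h_meas:
  "(\<lambda>p. ennreal (msq (game_step (snd p) (jump_chain s0 (fst p) k)))) \<in> borel_measurable (PiM {..<k} (\<lambda>_. Munif) \<Otimes>\<^sub>M Munif)"
proof -
  let ?M = "PiM {..<k} (\<lambda>_. Munif) \<Otimes>\<^sub>M Munif"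
  have c: "(\<lambda>p. jump_chain s0 (fst p) k) \<in> measurable ?M (count_space UNIV)"
  proof -
    have "(\<lambda>U. jump_chain s0 U k) \<in> measurable (PiM {..<k} (\<lambda>_. Munif)) (count_space UNIV)"
      by (rule m_chain') (rule comp_unif, simp)
    then show ?thesis by (rule measurable_compose[OF measurable_fst])
  qed
  have sn: "(\<lambda>p::(nat \<Rightarrow> real) \<times> real. snd p) \<in> borel_measurable ?M" by measurable
  have g: "(\<lambda>p. (\<lambda>s p. game_step (snd p) s) (jump_chain s0 (fst p) k) p) \<in> measurable ?M (count_space UNIV)"
    by (rule measurable_compose_countable[OF m_step2[OF sn] c])
  have "(\<lambda>s::nat\<times>nat. ennreal (msq s)) \<in> borel_measurable (count_space UNIV)" by simp
  from measurable_compose[OF g this] show ?thesis by simp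
qed

lemma msq_nonneg: "0 \<le> msq s" by (simp add: msq_def)

lemma exp_bound:
  "(\<integral>\<^sup>+U. ennreal (msq (jump_chain s0 U k)) \<partial>PU) \<le> ennreal (msq s0 + real k * (2 * real (fst s0 + snd s0))^2)"
proof (induction k)
  case 0
  have "(\<integral>\<^sup>+U. ennreal (msq (jump_chain s0 U 0)) \<partial>PU) = ennreal (msq s0)"
    using prob_space.emeasure_space_1[OF prob_PU] by simp
  then show ?case by simp
next
  case (Suc k)
  define C where "C = (2 * real (fst s0 + snd s0))^2"
  have C0: "0 \<le> C" by (simp add: C_def)
  define h where "h p = ennreal (msq (game_step (snd p) (jump_chain s0 (fst p) k)))" for p :: "(nat \<Rightarrow> real) \<times> real"
  have hm: "h \<in> borel_measurable (PiM {..<k} (\<lambda>_. Munif) \<Otimes>\<^sub>M Munif)"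
    unfolding h_def by (rule h_meas)
  have rc: "jump_chain s0 (restrict U {..<k}) k = jump_chain s0 U k" for U
    by (rule chain_cong) simp
  have m: "(\<lambda>U. ennreal (msq (jump_chain s0 U k))) \<in> borel_measurable PU"
  proof -
    have "(\<lambda>U. jump_chain s0 U k) \<in> measurable PU (count_space UNIV)"
      by (rule m_chain') (rule comp_unif, simp)
    moreover have "(\<lambda>s::nat\<times>nat. ennreal (msq s)) \<in> borel_measurable (count_space UNIV)" by simp
    ultimately show ?thesis by (rule measurable_compose[where f="\<lambda>U. jump_chain s0 U k" and g="\<lambda>s. ennreal (msq s)"])
  qed
  have "(\<integral>\<^sup>+U. ennreal (msq (jump_chain s0 U (Suc k))) \<partial>PU) = (\<integral>\<^sup>+U. h (restrict U {..<k}, U k) \<partial>PU)"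
    by (rule nn_integral_cong) (simp add: h_def rc)
  also have "\<dots> = (\<integral>\<^sup>+U. (\<integral>\<^sup>+y. h (restrict U {..<k}, y) \<partial>Munif) \<partial>PU)"
    by (rule nn_step[OF prob_Munif hm])
  also have "\<dots> = (\<integral>\<^sup>+U. (\<integral>\<^sup>+y. ennreal (msq (game_step y (jump_chain s0 U k))) \<partial>Munif) \<partial>PU)"
    by (rule nn_integral_cong) (simp add: h_def rc)
  also have "\<dots> \<le> (\<integral>\<^sup>+U. ennreal (msq (jump_chain s0 U k)) + ennreal C \<partial>PU)"
  proof (rule nn_integral_mono)
    fix U
    have "fst (jump_chain s0 U k) + snd (jump_chain s0 U k) \<le> fst s0 + snd s0"
      using chain_bound[of s0 U k] by simp
    from inner_step[OF this] have "(\<integral>\<^sup>+y. ennreal (msq (game_step y (jump_chain s0 U k))) \<partial>Munif) \<le> ennreal (msq (jump_chain s0 U k) + C)"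
      by (simp only: C_def)
    also have "ennreal (msq (jump_chain s0 U k) + C) = ennreal (msq (jump_chain s0 U k)) + ennreal C"
      by (rule ennreal_plus) (simp_all add: msq_nonneg C0)
    finally show "(\<integral>\<^sup>+y. ennreal (msq (game_step y (jump_chain s0 U k))) \<partial>Munif) \<le> ennreal (msq (jump_chain s0 U k)) + ennreal C" .
  qed
  also have "\<dots> = (\<integral>\<^sup>+U. ennreal (msq (jump_chain s0 U k)) \<partial>PU) + (\<integral>\<^sup>+U. ennreal C \<partial>PU)"
    by (rule nn_integral_add) (simp_all add: m)
  also have "(\<integral>\<^sup>+U. ennreal C \<partial>PU) = ennreal C"
    using prob_space.emeasure_space_1[OF prob_PU] by (simp add: nn_integral_const)
  also have "(\<integral>\<^sup>+U. ennreal (msq (jump_chain s0 U k)) \<partial>PU) + ennreal C \<le> ennreal (msq s0 + real k * C) + ennreal C"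
    using Suc.IH unfolding C_def by (rule add_right_mono)
  also have "ennreal (msq s0 + real k * C) + ennreal C = ennreal (msq s0 + real (Suc k) * C)"
  proof -
    have "ennreal (msq s0 + real k * C) + ennreal C = ennreal (msq s0 + real k * C + C)"
      by (rule ennreal_plus[symmetric]) (simp_all add: msq_nonneg C0)
    then show ?thesis by (simp add: algebra_simps)
  qed
  finally show ?case by (simp only: C_def)
qed



lemma prob_Mexp: "prob_space Mexp"
  by (rule prob_space_exponential_density) simp

lemma distr_Mexp: "distributed Mexp lborel (\<lambda>x. x) (exponential_density 1)"
  unfolding distributed_def
proof (intro conjI)
  show "distr Mexp lborel (\<lambda>x. x) = density lborel (\<lambda>x. ennreal (exponential_density 1 x))"
    by (rule distr_id2) simp
  show "(\<lambda>x. ennreal (exponential_density 1 x)) \<in> borel_measurable lborel"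
    by (simp add: exponential_density_def)
  show "(\<lambda>x. x) \<in> measurable Mexp lborel"
    by (rule measurable_ident_sets) simp
qed

lemma mom: "has_bochner_integral Mexp (\<lambda>x. x ^ i) (fact i)"
  using prob_space.has_bochner_integral_erlang_ith_moment[OF prob_Mexp _ distr_Mexp, of i] by simp

lemma inner_exp: "(\<integral>\<^sup>+y. ennreal ((A + (y - 1))^2) \<partial>Mexp) = ennreal (A^2 + 1)"
proof -
  have h: "has_bochner_integral Mexp (\<lambda>y. (A-1)^2 * y^0 + (2*(A-1)) * y^1 + y^2) ((A-1)^2 * fact 0 + (2*(A-1)) * fact 1 + fact 2)"
    by (intro has_bochner_integral_add has_bochner_integral_mult_right mom)
  have e: "(\<lambda>y. (A-1)^2 * y^0 + (2*(A-1)) * y^1 + y^2) = (\<lambda>y. (A + (y - 1))^2)"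
    by (rule ext) (simp add: power2_eq_square algebra_simps)
  have v: "(A-1)^2 * fact 0 + (2*(A-1)) * fact 1 + fact 2 = A^2 + (1::real)"
    by (simp add: power2_eq_square algebra_simps numeral_2_eq_2)
  from h have h': "has_bochner_integral Mexp (\<lambda>y. (A + (y - 1))^2) (A^2 + 1)" unfolding e v .
  have "(\<integral>\<^sup>+y. ennreal ((A + (y - 1))^2) \<partial>Mexp) = ennreal (integral\<^sup>L Mexp (\<lambda>y. (A + (y - 1))^2))"
    by (rule nn_integral_eq_integral) (auto intro: integrable.intros[OF h'])
  also have "\<dots> = ennreal (A^2 + 1)" using has_bochner_integral_integral_eq[OF h'] by simp
  finally show ?thesis .
qed

lemma prob_PE: "prob_space PE"
  by (rule prob_space_PiM) (rule prob_Mexp)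

lemma comp_exp: "i \<in> I \<Longrightarrow> (\<lambda>U. U i) \<in> borel_measurable (PiM I (\<lambda>_. Mexp))"
proof -
  assume i: "i \<in> I"
  have "(\<lambda>U. U i) \<in> measurable (PiM I (\<lambda>_. Mexp)) Mexp"
    by (rule measurable_component_singleton[OF i])
  also have "measurable (PiM I (\<lambda>_. Mexp)) Mexp = borel_measurable (PiM I (\<lambda>_. Mexp))"
    by (rule measurable_cong_sets) simp_all
  finally show ?thesis .
qed

lemma arr_meas: "(\<lambda>E. arrival E n) \<in> borel_measurable (PiM I (\<lambda>_. Mexp))" if "{..<n} \<subseteq> I"
  unfolding arrival_def using that by (intro borel_measurable_sum comp_exp) auto

lemma exp_sq: "(\<integral>\<^sup>+E. ennreal ((arrival E n - real n)^2) \<partial>PE) = ennreal (real n)"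
proof (induction n)
  case 0
  then show ?case by (simp add: arrival_def)
next
  case (Suc n)
  define h where "h p = ennreal ((arrival (fst p) n - real n + (snd p - 1))^2)" for p :: "(nat \<Rightarrow> real) \<times> real"
  have hm: "h \<in> borel_measurable (PiM {..<n} (\<lambda>_. Mexp) \<Otimes>\<^sub>M Mexp)"
  proof -
    have a: "(\<lambda>p. arrival (fst p) n) \<in> borel_measurable (PiM {..<n} (\<lambda>_. Mexp) \<Otimes>\<^sub>M Mexp)"
      by (rule measurable_compose[OF measurable_fst arr_meas]) simp
    have s: "(\<lambda>p. snd p) \<in> borel_measurable (PiM {..<n} (\<lambda>_. Mexp) \<Otimes>\<^sub>M Mexp)"
      by (rule measurable_compose[OF measurable_snd measurable_ident_sets]) simp
    show ?thesis unfolding h_def using a s by measurable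
  qed
  have ra: "arrival (restrict E {..<n}) n = arrival E n" for E
    by (simp add: arrival_def)
  have aS: "arrival E (Suc n) - real (Suc n) = arrival E n - real n + (E n - 1)" for E
    by (simp add: arrival_def)
  have "(\<integral>\<^sup>+E. ennreal ((arrival E (Suc n) - real (Suc n))^2) \<partial>PE) = (\<integral>\<^sup>+E. h (restrict E {..<n}, E n) \<partial>PE)"
    by (rule nn_integral_cong) (simp only: h_def ra aS fst_conv snd_conv)
  also have "\<dots> = (\<integral>\<^sup>+E. (\<integral>\<^sup>+y. h (restrict E {..<n}, y) \<partial>Mexp) \<partial>PE)"
    by (rule nn_step[OF prob_Mexp hm])
  also have "\<dots> = (\<integral>\<^sup>+E. ennreal ((arrival E n - real n)^2 + 1) \<partial>PE)"
    by (rule nn_integral_cong) (simp add: h_def ra inner_exp)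
  also have "\<dots> = (\<integral>\<^sup>+E. ennreal ((arrival E n - real n)^2) \<partial>PE) + (\<integral>\<^sup>+E. 1 \<partial>PE)"
  proof -
    have "(\<lambda>E. ennreal ((arrival E n - real n)^2)) \<in> borel_measurable PE"
      using arr_meas[of n UNIV] by measurable
    then show ?thesis by (subst nn_integral_add[symmetric]) (simp_all add: ennreal_plus)
  qed
  also have "(\<integral>\<^sup>+E. 1 \<partial>PE) = 1"
    using prob_space.emeasure_space_1[OF prob_PE] by simp
  finally show ?case using Suc.IH by (simp add: ennreal_plus[symmetric])
qed



section \<open>Chain combinatorics\<close>

lemma Zs_up: "Zs s0 U n \<Longrightarrow> n \<le> m \<Longrightarrow> Zs s0 U m"
  by (induction m) (auto simp: le_Suc_eq intro: Zs_mono)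

lemma frozen: "Zs s0 U k \<Longrightarrow> jump_chain s0 U (Suc k) = jump_chain s0 U k"
  by (cases "jump_chain s0 U k") (auto simp: Zs_def game_step_def)

lemma frozen_up: "Zs s0 U k \<Longrightarrow> k \<le> m \<Longrightarrow> jump_chain s0 U m = jump_chain s0 U k"
proof (induction m)
  case 0 then show ?case by simp
next
  case (Suc m)
  show ?case
  proof (cases "k = Suc m")
    case True then show ?thesis by simp
  next
    case False
    then have km: "k \<le> m" using Suc.prems by simp
    have "Zs s0 U m" using Zs_up[OF Suc.prems(1) km] .
    then have "jump_chain s0 U (Suc m) = jump_chain s0 U m" by (rule frozen)
    with Suc.IH[OF Suc.prems(1) km] show ?thesis by simp
  qed
qed

lemma sum_live: "\<not> Zs s0 U k \<Longrightarrow> fst (jump_chain s0 U k) + snd (jump_chain s0 U k) + k = fst s0 + snd s0"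
proof (induction k)
  case 0 then show ?case by simp
next
  case (Suc k)
  have nz: "\<not> Zs s0 U k" using Suc.prems Zs_mono by blast
  obtain a b where ab: "jump_chain s0 U k = (a, b)" by (cases "jump_chain s0 U k")
  have "a \<noteq> 0" "b \<noteq> 0" using nz ab by (auto simp: Zs_def)
  then have "fst (jump_chain s0 U (Suc k)) + snd (jump_chain s0 U (Suc k)) + 1 = a + b"
    using ab by (auto simp: game_step_def)
  then show ?case using Suc.IH[OF nz] ab by simp
qed

lemma Zs_S: "Zs s0 U (fst s0 + snd s0)"
proof (rule ccontr)
  assume "\<not> ?thesis"
  from sum_live[OF this] have "fst (jump_chain s0 U (fst s0 + snd s0)) = 0" by simp
  with \<open>\<not> ?thesis\<close> show False by (simp add: Zs_def)
qed

definition Kt :: "nat \<times> nat \<Rightarrow> (nat \<Rightarrow> real) \<Rightarrow> nat" where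
  "Kt s0 U = (LEAST n. Zs s0 U n)"

lemma Kt_props:
  assumes a: "fst s0 > 0" and b: "snd s0 > 0"
  shows "Zs s0 U (Kt s0 U)" "Kt s0 U \<le> fst s0 + snd s0" "1 \<le> Kt s0 U"
    "\<And>n. Zs s0 U n \<longleftrightarrow> Kt s0 U \<le> n"
    "fst (jump_chain s0 U (fst s0 + snd s0)) + snd (jump_chain s0 U (fst s0 + snd s0)) + Kt s0 U = fst s0 + snd s0"
proof -
  let ?K = "Kt s0 U" and ?S = "fst s0 + snd s0"
  show z: "Zs s0 U ?K" unfolding Kt_def by (rule LeastI[of "Zs s0 U", OF Zs_S])
  show "?K \<le> ?S" unfolding Kt_def by (rule Least_le[of "Zs s0 U", OF Zs_S])
  have nz0: "\<not> Zs s0 U 0" using a b by (simp add: Zs_def)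
  show k1: "1 \<le> ?K" using z nz0 by (cases ?K) auto
  show iff: "Zs s0 U n \<longleftrightarrow> ?K \<le> n" for n
    using Zs_up[OF z] Least_le[of "Zs s0 U" n] unfolding Kt_def by auto
  obtain k where k: "?K = Suc k" using k1 by (cases ?K) auto
  have nzk: "\<not> Zs s0 U k" using iff[of k] k by simp
  obtain x y where xy: "jump_chain s0 U k = (x, y)" by (cases "jump_chain s0 U k")
  have "x \<noteq> 0" "y \<noteq> 0" using nzk xy by (auto simp: Zs_def)
  then have st: "fst (jump_chain s0 U (Suc k)) + snd (jump_chain s0 U (Suc k)) + 1 = x + y"
    using xy by (auto simp: game_step_def)
  have fr: "jump_chain s0 U ?S = jump_chain s0 U ?K"
    by (rule frozen_up[OF z]) (simp add: Kt_def Least_le[of "Zs s0 U", OF Zs_S])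
  show "fst (jump_chain s0 U ?S) + snd (jump_chain s0 U ?S) + ?K = ?S"
    using sum_live[OF nzk] st xy k fr by simp
qed

lemma msq_final:
  assumes "Zs s0 U n"
  shows "msq (jump_chain s0 U n) = real (fst (jump_chain s0 U n) + snd (jump_chain s0 U n)) ^ 4"
  using assms by (auto simp: Zs_def msq_def power2_eq_square power4_eq_xxxx)

section \<open>Ruin time formula\<close>

lemma arrival_Suc: "arrival E (Suc k) = arrival E k + E k"
  by (simp add: arrival_def)

lemma arrival_smono: "(\<forall>i. E i > 0) \<Longrightarrow> strict_mono (arrival E)"
  by (rule strict_monoI_Suc) (simp add: arrival_Suc)

lemma ruin_formula:
  assumes N: "N > 0" and a: "fst s0 > 0" and b: "snd s0 > 0" and E: "\<forall>i. fst \<omega> i > 0"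
  shows "ruin_time N s0 \<omega> = arrival (fst \<omega>) (Kt s0 (snd \<omega>)) / real N"
proof -
  let ?E = "fst \<omega>" and ?U = "snd \<omega>" and ?K = "Kt s0 (snd \<omega>)"
  note K = Kt_props[OF a b, of ?U]
  have sm: "strict_mono (arrival ?E)" using arrival_smono E by blast
  have le_iff: "arrival ?E i \<le> arrival ?E j \<longleftrightarrow> i \<le> j" for i j using sm by (simp add: strict_mono_less_eq)
  define t0 where "t0 = arrival ?E ?K / real N"
  let ?T = "{t. t > 0 \<and> Zs s0 ?U (card {k. 1 \<le> k \<and> arrival ?E k \<le> real N * t})}"
  have "ruin_time N s0 \<omega> = Inf ?T" unfolding ruin_time_def ruin_set_eq[OF N] ..
  also have "Inf ?T = t0"
  proof (rule cInf_eq_minimum)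
    have a0: "arrival ?E 0 = 0" by (simp add: arrival_def)
    have "arrival ?E 0 < arrival ?E ?K" using sm K(3) by (simp add: strict_mono_less)
    then have t0pos: "t0 > 0" using N a0 by (simp add: t0_def)
    have "{k. 1 \<le> k \<and> arrival ?E k \<le> real N * t0} = {1..?K}"
      using N by (auto simp: t0_def le_iff)
    then show "t0 \<in> ?T" using t0pos K(1) by simp
  next
    fix t assume t: "t \<in> ?T"
    show "t0 \<le> t"
    proof (rule ccontr)
      assume "\<not> t0 \<le> t"
      then have lt: "real N * t < arrival ?E ?K" using N by (simp add: t0_def field_simps)
      have sub: "{k. 1 \<le> k \<and> arrival ?E k \<le> real N * t} \<subseteq> {1..<?K}"
      proof
        fix k assume "k \<in> {k. 1 \<le> k \<and> arrival ?E k \<le> real N * t}"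
        then have "1 \<le> k" "arrival ?E k < arrival ?E ?K" using lt by auto
        then show "k \<in> {1..<?K}" using sm by (simp add: strict_mono_less)
      qed
      have "card {k. 1 \<le> k \<and> arrival ?E k \<le> real N * t} \<le> card {1..<?K}"
        by (rule card_mono[OF _ sub]) simp
      then have "card {k. 1 \<le> k \<and> arrival ?E k \<le> real N * t} < ?K" using K(3) by simp
      then show False using t K(4) by auto
    qed
  qed
  finally show ?thesis by (simp add: t0_def)
qed



lemma markov1:
  assumes P: "prob_space M" and g[measurable]: "g \<in> borel_measurable M" and g0: "\<And>x. 0 \<le> g x"
    and I: "(\<integral>\<^sup>+x. ennreal (g x) \<partial>M) \<le> ennreal B" and B: "0 \<le> B" and a: "a > 0"
  shows "measure M {x\<in>space M. a \<le> g x} \<le> B / a"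
proof -
  interpret prob_space M by (rule P)
  have sub: "{x\<in>space M. a \<le> g x} \<subseteq> {x\<in>space M. 1 \<le> ennreal (1/a) * ennreal (g x)}"
  proof
    fix x assume x: "x \<in> {x\<in>space M. a \<le> g x}"
    then have "1 \<le> (1/a) * g x" using a by (simp add: field_simps)
    then have h1: "ennreal 1 \<le> ennreal ((1/a) * g x)" by (rule ennreal_leI)
    have e: "ennreal ((1/a) * g x) = ennreal (1/a) * ennreal (g x)"
      by (rule ennreal_mult) (use a g0 in auto)
    from h1 have "1 \<le> ennreal (1/a) * ennreal (g x)" unfolding e by simp
    then show "x \<in> {x\<in>space M. 1 \<le> ennreal (1/a) * ennreal (g x)}"
      using x by simp
  qed
  have "emeasure M {x\<in>space M. a \<le> g x} \<le> emeasure M {x\<in>space M. 1 \<le> ennreal (1/a) * ennreal (g x)}"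
    by (rule emeasure_mono[OF sub]) simp
  also have "\<dots> \<le> ennreal (1/a) * (\<integral>\<^sup>+x. ennreal (g x) * indicator (space M) x \<partial>M)"
    by (rule nn_integral_Markov_inequality[where u="\<lambda>x. ennreal (g x)" and A="space M"]) simp_all
  also have "(\<integral>\<^sup>+x. ennreal (g x) * indicator (space M) x \<partial>M) = (\<integral>\<^sup>+x. ennreal (g x) \<partial>M)"
    by (rule nn_integral_cong) simp
  also have "ennreal (1/a) * (\<integral>\<^sup>+x. ennreal (g x) \<partial>M) \<le> ennreal (1/a) * ennreal B"
    by (rule mult_left_mono[OF I]) simp
  also have "\<dots> = ennreal (B / a)" using a B by (simp add: ennreal_mult[symmetric])
  finally have "emeasure M {x\<in>space M. a \<le> g x} \<le> ennreal (B / a)" .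
  then show ?thesis using a B by (simp add: emeasure_eq_measure)
qed

lemma prob_game: "prob_space game_space"
  unfolding game_space_def
  by (intro prob_space_pair prob_PE prob_PU)

lemma gs_fst:
  assumes A: "A \<in> sets PE"
  shows "measure game_space {\<omega>\<in>space game_space. fst \<omega> \<in> A} = measure PE A"
proof -
  interpret PU: prob_space PU by (rule prob_PU)
  have e: "{\<omega>\<in>space game_space. fst \<omega> \<in> A} = A \<times> space PU"
    using sets.sets_into_space[OF A] by (auto simp: game_space_def space_pair_measure)
  have "emeasure game_space (A \<times> space PU) = emeasure PE A * emeasure PU (space PU)"
    unfolding game_space_def by (rule PU.emeasure_pair_measure_Times[OF A]) simp
  then have "emeasure game_space (A \<times> space PU) = emeasure PE A" by (simp add: PU.emeasure_space_1)
  then show ?thesis unfolding e measure_def by simp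
qed

lemma gs_snd:
  assumes B: "B \<in> sets PU"
  shows "measure game_space {\<omega>\<in>space game_space. snd \<omega> \<in> B} = measure PU B"
proof -
  interpret PU: prob_space PU by (rule prob_PU)
  interpret PE: prob_space PE by (rule prob_PE)
  have e: "{\<omega>\<in>space game_space. snd \<omega> \<in> B} = space PE \<times> B"
    using sets.sets_into_space[OF B] by (auto simp: game_space_def space_pair_measure)
  have "emeasure game_space (space PE \<times> B) = emeasure PE (space PE) * emeasure PU B"
    unfolding game_space_def by (rule PU.emeasure_pair_measure_Times[OF _ B]) simp
  then have "emeasure game_space (space PE \<times> B) = emeasure PU B" by (simp add: PE.emeasure_space_1)
  then show ?thesis unfolding e measure_def by simp
qed

lemma null_bad: "measure game_space {\<omega>\<in>space game_space. \<not> (\<forall>i. fst \<omega> i > 0)} = 0"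
proof -
  interpret G: prob_space game_space by (rule prob_game)
  interpret Pexp: prob_space Mexp by (rule prob_Mexp)
  interpret PP: product_prob_space "\<lambda>_. Mexp" UNIV by unfold_locales
  have single: "measure game_space {\<omega>\<in>space game_space. fst \<omega> i \<le> 0} = 0" for i
  proof -
    have A: "{E\<in>space PE. E i \<le> 0} \<in> sets PE" using comp_exp[of i UNIV] by measurable
    have "{\<omega>\<in>space game_space. fst \<omega> i \<le> 0} = {\<omega>\<in>space game_space. fst \<omega> \<in> {E\<in>space PE. E i \<le> 0}}"
      by (auto simp: game_space_def space_pair_measure)
    then have "measure game_space {\<omega>\<in>space game_space. fst \<omega> i \<le> 0} = measure PE {E\<in>space PE. E i \<le> 0}"
      using gs_fst[OF A] by simp
    also have "emeasure PE {E\<in>space PE. E i \<le> 0} = emeasure Mexp {x. x \<le> 0}"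
    proof -
      have "{x. x \<le> (0::real)} \<in> sets Mexp" by simp
      from PP.emeasure_PiM_Collect_single[OF _ this, of i] show ?thesis by simp
    qed
    then have "measure PE {E\<in>space PE. E i \<le> 0} = measure Mexp {x. x \<le> 0}"
      by (simp add: measure_def)
    also have "measure Mexp {x. x \<le> 0} = 0"
      using Pexp.exponential_distributedD_le[OF distr_Mexp, of 0] by simp
    finally show ?thesis .
  qed
  have nul: "{\<omega>\<in>space game_space. fst \<omega> i \<le> 0} \<in> null_sets game_space" for i
  proof
    show "{\<omega>\<in>space game_space. fst \<omega> i \<le> 0} \<in> sets game_space" by measurable
    then show "emeasure game_space {\<omega>\<in>space game_space. fst \<omega> i \<le> 0} = 0"
      using single[of i] by (simp add: G.emeasure_eq_measure)
  qed
  have "{\<omega>\<in>space game_space. \<not> (\<forall>i. fst \<omega> i > 0)} = (\<Union>i. {\<omega>\<in>space game_space. fst \<omega> i \<le> 0})"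
    by (auto simp: not_less)
  also have "\<dots> \<in> null_sets game_space" using nul by blast
  finally have "emeasure game_space {\<omega>\<in>space game_space. \<not> (\<forall>i. fst \<omega> i > 0)} = 0" by (rule null_setsD1)
  then show ?thesis by (simp add: measure_def)
qed



lemma B2_bound:
  assumes a: "a > 0"
  shows "measure game_space {\<omega>\<in>space game_space. a \<le> (arrival (fst \<omega>) n - real n)^2} \<le> real n / a"
proof -
  have A: "{E\<in>space PE. a \<le> (arrival E n - real n)^2} \<in> sets PE"
    using arr_meas[of n UNIV] by measurable
  have "{\<omega>\<in>space game_space. a \<le> (arrival (fst \<omega>) n - real n)^2} = {\<omega>\<in>space game_space. fst \<omega> \<in> {E\<in>space PE. a \<le> (arrival E n - real n)^2}}"
    by (auto simp: game_space_def space_pair_measure)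
  then have "measure game_space {\<omega>\<in>space game_space. a \<le> (arrival (fst \<omega>) n - real n)^2} = measure PE {E\<in>space PE. a \<le> (arrival E n - real n)^2}"
    using gs_fst[OF A] by simp
  also have "\<dots> \<le> real n / a"
    by (rule markov1[OF prob_PE _ _ _ _ a]) (use arr_meas[of n UNIV] exp_sq[of n] in \<open>auto\<close>)
  finally show ?thesis .
qed

lemma B1_bound:
  assumes a: "a > 0"
  shows "measure game_space {\<omega>\<in>space game_space. a \<le> msq (jump_chain s0 (snd \<omega>) k)} \<le> (msq s0 + real k * (2 * real (fst s0 + snd s0))^2) / a"
proof -
  have m: "(\<lambda>U. msq (jump_chain s0 U k)) \<in> borel_measurable PU"
  proof -
    have "(\<lambda>U. jump_chain s0 U k) \<in> measurable PU (count_space UNIV)"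
      by (rule m_chain') (rule comp_unif, simp)
    moreover have "(\<lambda>s::nat\<times>nat. msq s) \<in> borel_measurable (count_space UNIV)" by simp
    ultimately show ?thesis by (rule measurable_compose[where f="\<lambda>U. jump_chain s0 U k" and g="\<lambda>s. msq s"])
  qed
  have A: "{U\<in>space PU. a \<le> msq (jump_chain s0 U k)} \<in> sets PU"
    using m by measurable
  have "{\<omega>\<in>space game_space. a \<le> msq (jump_chain s0 (snd \<omega>) k)} = {\<omega>\<in>space game_space. snd \<omega> \<in> {U\<in>space PU. a \<le> msq (jump_chain s0 U k)}}"
    by (auto simp: game_space_def space_pair_measure)
  then have "measure game_space {\<omega>\<in>space game_space. a \<le> msq (jump_chain s0 (snd \<omega>) k)} = measure PU {U\<in>space PU. a \<le> msq (jump_chain s0 U k)}"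
    using gs_snd[OF A] by simp
  also have "\<dots> \<le> (msq s0 + real k * (2 * real (fst s0 + snd s0))^2) / a"
    by (rule markov1[OF prob_PU m msq_nonneg exp_bound _ a]) (simp add: msq_nonneg)
  finally show ?thesis .
qed



lemma incl:
  fixes N :: nat and s0 :: "nat \<times> nat" and d T :: real
  defines "S \<equiv> fst s0 + snd s0"
  defines "j \<equiv> S - nat \<lfloor>d * real N\<rfloor>"
  assumes N: "N > 0" and a: "fst s0 > 0" and b: "snd s0 > 0" and d: "d > 0"
    and ST: "\<bar>real S / real N - T\<bar> < d"
    and E: "\<forall>i. fst \<omega> i > 0"
    and nB1: "\<not> (d * real N)^4 \<le> msq (jump_chain s0 (snd \<omega>) S)"
    and nB2: "\<not> (d * real N)^2 \<le> (arrival (fst \<omega>) S - real S)^2"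
    and nB3: "\<not> (d * real N)^2 \<le> (arrival (fst \<omega>) j - real j)^2"
  shows "\<bar>ruin_time N s0 \<omega> - T\<bar> < 3 * d"
proof -
  let ?E = "fst \<omega>" and ?U = "snd \<omega>"
  let ?K = "Kt s0 ?U"
  note K = Kt_props[OF a b, of ?U]
  have rt: "ruin_time N s0 \<omega> = arrival ?E ?K / real N" by (rule ruin_formula[OF N a b E])
  define R where "R = fst (jump_chain s0 ?U S) + snd (jump_chain s0 ?U S)"
  have RK: "R + ?K = S" using K(5) unfolding R_def S_def by simp
  have ZS: "Zs s0 ?U S" unfolding S_def by (rule Zs_S)
  have msqR: "msq (jump_chain s0 ?U S) = real R ^ 4" unfolding R_def by (rule msq_final[OF ZS])
  have dN: "0 < d * real N" using d N by simp
  have "real R ^ 4 < (d * real N) ^ 4" using nB1 msqR by simp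
  then have Rlt: "real R < d * real N" by (rule power_less_imp_less_base) (use dN in simp)
  have "R \<le> nat \<lfloor>d * real N\<rfloor>" using Rlt by (simp add: le_nat_floor)
  then have jK: "j \<le> ?K" using RK unfolding j_def by simp
  have KS: "?K \<le> S" using K(2) unfolding S_def .
  have sm: "mono (arrival ?E)" using arrival_smono[OF E] by (rule strict_mono_mono)
  have a1: "arrival ?E j \<le> arrival ?E ?K" using sm jK by (simp add: monoD)
  have a2: "arrival ?E ?K \<le> arrival ?E S" using sm KS by (simp add: monoD)
  have sq: "\<bar>x\<bar> < y" if "\<not> y^2 \<le> x^2" "0 < y" for x y :: real
  proof -
    have "\<bar>x\<bar>^2 < y^2" using that by simp
    then show ?thesis by (rule power_less_imp_less_base) (use that in simp)
  qed
  have b2: "\<bar>arrival ?E S - real S\<bar> < d * real N" by (rule sq[OF nB2 dN])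
  have b3: "\<bar>arrival ?E j - real j\<bar> < d * real N" by (rule sq[OF nB3 dN])
  have fl: "real (nat \<lfloor>d * real N\<rfloor>) \<le> d * real N" using dN by linarith
  have rj: "real j \<ge> real S - d * real N"
  proof (cases "nat \<lfloor>d * real N\<rfloor> \<le> S")
    case True then show ?thesis using fl unfolding j_def by (simp add: of_nat_diff)
  next
    case False then have "real S < d * real N" using fl by linarith
    then show ?thesis by simp
  qed
  have lo: "real S - 2 * (d * real N) < arrival ?E ?K" using a1 b3 rj by linarith
  have hi: "arrival ?E ?K < real S + d * real N" using a2 b2 by linarith
  have Npos: "real N > 0" using N by simp
  have e1: "real S / real N - 2 * d = (real S - 2 * (d * real N)) / real N"
    using Npos by (simp add: diff_divide_distrib)
  have e2: "real S / real N + d = (real S + d * real N) / real N"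
    using Npos by (simp add: add_divide_distrib)
  have lo': "real S / real N - 2 * d < arrival ?E ?K / real N"
    unfolding e1 using divide_strict_right_mono[OF lo Npos] .
  have hi': "arrival ?E ?K / real N < real S / real N + d"
    unfolding e2 using divide_strict_right_mono[OF hi Npos] .
  show ?thesis using lo' hi' ST rt by linarith
qed



lemma aux2: "(n::real) > 0 \<Longrightarrow> d > 0 \<Longrightarrow> 4 * (z/n)^3 * (1/n) / d^4 = z * (2*z)^2 / (d*n)^4"
  by (simp add: power_divide power_mult_distrib field_simps power2_eq_square power3_eq_cube power4_eq_xxxx)

lemma aux3: "(n::real) > 0 \<Longrightarrow> d > 0 \<Longrightarrow> (z/n) * (1/n) / d^2 = z / (d*n)^2"
  by (simp add: power_divide power_mult_distrib field_simps power2_eq_square)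

lemma lim_f:
  fixes X0 Y0 :: "nat \<Rightarrow> nat" and x0 y0 d :: real
  assumes u: "(\<lambda>N. real (X0 N) / real N) \<longlonglongrightarrow> x0"
      and v: "(\<lambda>N. real (Y0 N) / real N) \<longlonglongrightarrow> y0"
      and xy: "x0 = y0" and d: "d > 0"
  shows "(\<lambda>N. (msq (X0 N, Y0 N) + real (X0 N + Y0 N) * (2 * real (X0 N + Y0 N))^2) / (d * real N)^4
              + 2 * (real (X0 N + Y0 N) / (d * real N)^2)) \<longlonglongrightarrow> 0"
proof -
  define U where "U N = real (X0 N) / real N" for N
  define V where "V N = real (Y0 N) / real N" for N
  define W where "W N = 1 / real N" for N :: nat
  let ?g = "\<lambda>N. ((U N ^ 2 - V N ^ 2)^2 + 4 * (U N + V N)^3 * W N) / d^4 + 2 * ((U N + V N) * W N / d^2)"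
  have lim: "?g \<longlonglongrightarrow> ((x0^2 - y0^2)^2 + 4 * (x0 + y0)^3 * 0) / d^4 + 2 * ((x0 + y0) * 0 / d^2)"
    unfolding U_def V_def W_def
    by (intro tendsto_intros u v lim_1_over_n; use d in simp)
  then have lim': "?g \<longlonglongrightarrow> 0" using xy by simp
  have ev: "\<forall>\<^sub>F N in sequentially. ?g N = (msq (X0 N, Y0 N) + real (X0 N + Y0 N) * (2 * real (X0 N + Y0 N))^2) / (d * real N)^4
              + 2 * (real (X0 N + Y0 N) / (d * real N)^2)"
    using eventually_gt_at_top[of 0]
  proof eventually_elim
    case (elim N)
    then have Np: "real N > 0" by simp
    have e1: "(U N ^ 2 - V N ^ 2)^2 / d^4 = msq (X0 N, Y0 N) / (d * real N)^4"
    proof -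
      have h1: "U N ^ 2 - V N ^ 2 = (real (X0 N)^2 - real (Y0 N)^2) / real N ^ 2"
        by (simp add: U_def V_def power_divide diff_divide_distrib)
      have h2: "(real N ^ 2) ^ 2 = real N ^ 4" by (simp flip: power_mult)
      have "(U N ^ 2 - V N ^ 2)^2 = (real (X0 N)^2 - real (Y0 N)^2)^2 / real N ^ 4"
        unfolding h1 power_divide h2 ..
      then show ?thesis by (simp add: msq_def power_mult_distrib divide_divide_eq_left mult.commute)
    qed
    have e2: "4 * (U N + V N)^3 * W N / d^4 = real (X0 N + Y0 N) * (2 * real (X0 N + Y0 N))^2 / (d * real N)^4"
    proof -
      have h: "U N + V N = real (X0 N + Y0 N) / real N" by (simp add: U_def V_def add_divide_distrib)
      show ?thesis unfolding W_def h by (rule aux2[OF Np d])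
    qed
    have e3: "(U N + V N) * W N / d^2 = real (X0 N + Y0 N) / (d * real N)^2"
    proof -
      have h: "U N + V N = real (X0 N + Y0 N) / real N" by (simp add: U_def V_def add_divide_distrib)
      show ?thesis unfolding W_def h by (rule aux3[OF Np d])
    qed
    show ?case using e1 e2 e3 by (simp add: add_divide_distrib)
  qed
  show ?thesis by (rule Lim_transform_eventually[OF lim' ev])
qed



theorem mainTheorem7:
  fixes X0 Y0 :: "nat \<Rightarrow> nat" and x0 y0 :: real
  assumes "(\<lambda>N. real (X0 N) / real N) \<longlonglongrightarrow> x0"
      and "(\<lambda>N. real (Y0 N) / real N) \<longlonglongrightarrow> y0"
      and "x0 = y0" and "x0 > 0"
  shows "(\<forall>N. ruin_time N (X0 N, Y0 N) \<in> borel_measurable game_space) \<and>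
         (\<forall>\<epsilon>>0. (\<lambda>N. measure game_space
              {\<omega> \<in> space game_space. \<bar>ruin_time N (X0 N, Y0 N) \<omega> - (x0 + y0)\<bar> > \<epsilon>})
            \<longlonglongrightarrow> 0)"
proof -
  note u = assms(1) and v = assms(2) and xy = assms(3) and x0 = assms(4)
  have part2: "(\<lambda>N. measure game_space
              {\<omega> \<in> space game_space. \<bar>ruin_time N (X0 N, Y0 N) \<omega> - (x0 + y0)\<bar> > \<epsilon>})
            \<longlonglongrightarrow> 0" if eps: "\<epsilon> > 0" for \<epsilon>
  proof -
    interpret G: prob_space game_space by (rule prob_game)
    define d where "d = \<epsilon> / 4"
    have d: "d > 0" using eps by (simp add: d_def)
    define f where "f N = (msq (X0 N, Y0 N) + real (X0 N + Y0 N) * (2 * real (X0 N + Y0 N))^2) / (d * real N)^4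
              + 2 * (real (X0 N + Y0 N) / (d * real N)^2)" for N
    have lim: "f \<longlonglongrightarrow> 0" unfolding f_def by (rule lim_f[OF u v xy d])
    have ev1: "\<forall>\<^sub>F N in sequentially. N > 0" by (rule eventually_gt_at_top)
    have ev2: "\<forall>\<^sub>F N in sequentially. X0 N > 0"
    proof -
      have "\<forall>\<^sub>F N in sequentially. real (X0 N) / real N > 0" by (rule order_tendstoD(1)[OF u x0])
      then show ?thesis by eventually_elim (auto intro: Nat.gr0I)
    qed
    have ev3: "\<forall>\<^sub>F N in sequentially. Y0 N > 0"
    proof -
      have "\<forall>\<^sub>F N in sequentially. real (Y0 N) / real N > 0" by (rule order_tendstoD(1)[OF v]) (use x0 xy in simp)
      then show ?thesis by eventually_elim (auto intro: Nat.gr0I)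
    qed
    have ev4: "\<forall>\<^sub>F N in sequentially. \<bar>real (X0 N + Y0 N) / real N - (x0 + y0)\<bar> < d"
    proof -
      have "(\<lambda>N. real (X0 N) / real N + real (Y0 N) / real N) \<longlonglongrightarrow> x0 + y0"
        by (rule tendsto_add[OF u v])
      then have "(\<lambda>N. real (X0 N + Y0 N) / real N) \<longlonglongrightarrow> x0 + y0"
        by (simp add: add_divide_distrib)
      from tendstoD[OF this d] show ?thesis by (simp add: dist_real_def)
    qed
    have bound: "\<forall>\<^sub>F N in sequentially. measure game_space
              {\<omega> \<in> space game_space. \<bar>ruin_time N (X0 N, Y0 N) \<omega> - (x0 + y0)\<bar> > \<epsilon>} \<le> f N"
      using ev1 ev2 ev3 ev4
    proof eventually_elim
      case (elim N)
      define s0 where "s0 = (X0 N, Y0 N)"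
      define S where "S = fst s0 + snd s0"
      define j where "j = S - nat \<lfloor>d * real N\<rfloor>"
      define A where "A = {\<omega> \<in> space game_space. \<bar>ruin_time N s0 \<omega> - (x0 + y0)\<bar> > \<epsilon>}"
      define Bad where "Bad = {\<omega>\<in>space game_space. \<not> (\<forall>i. fst \<omega> i > 0)}"
      define B1 where "B1 = {\<omega>\<in>space game_space. (d * real N)^4 \<le> msq (jump_chain s0 (snd \<omega>) S)}"
      define B2 where "B2 = {\<omega>\<in>space game_space. (d * real N)^2 \<le> (arrival (fst \<omega>) S - real S)^2}"
      define B3 where "B3 = {\<omega>\<in>space game_space. (d * real N)^2 \<le> (arrival (fst \<omega>) j - real j)^2}"
      have a: "fst s0 > 0" and b: "snd s0 > 0" using elim by (simp_all add: s0_def)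
      have ST: "\<bar>real S / real N - (x0 + y0)\<bar> < d" using elim(4) by (simp add: S_def s0_def)
      have sub: "A \<subseteq> Bad \<union> B1 \<union> B2 \<union> B3"
      proof
        fix \<omega> assume w: "\<omega> \<in> A"
        show "\<omega> \<in> Bad \<union> B1 \<union> B2 \<union> B3"
        proof (rule ccontr)
          assume "\<omega> \<notin> Bad \<union> B1 \<union> B2 \<union> B3"
          then have E: "\<forall>i. fst \<omega> i > 0"
            and n1: "\<not> (d * real N)^4 \<le> msq (jump_chain s0 (snd \<omega>) S)"
            and n2: "\<not> (d * real N)^2 \<le> (arrival (fst \<omega>) S - real S)^2"
            and n3: "\<not> (d * real N)^2 \<le> (arrival (fst \<omega>) j - real j)^2"
            using w by (auto simp: A_def Bad_def B1_def B2_def B3_def)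
          have "\<bar>ruin_time N s0 \<omega> - (x0 + y0)\<bar> < 3 * d"
            using incl[OF elim(1) a b d ST[unfolded S_def] E n1[unfolded S_def] n2[unfolded S_def] n3[unfolded j_def S_def]] .
          moreover have "\<epsilon> < \<bar>ruin_time N s0 \<omega> - (x0 + y0)\<bar>" using w by (simp add: A_def)
          ultimately show False using d_def eps by linarith
        qed
      qed
      have mc: "(\<lambda>\<omega>. msq (jump_chain s0 (snd \<omega>) S)) \<in> borel_measurable game_space"
        by (rule measurable_compose[OF m_chain_g]) simp
      have sA: "A \<in> sets game_space" unfolding A_def using ruin_meas[of N s0] by measurable
      have sBad: "Bad \<in> sets game_space" unfolding Bad_def by measurable
      have sB1: "B1 \<in> sets game_space" unfolding B1_def using mc by measurable
      have sB2: "B2 \<in> sets game_space" unfolding B2_def by measurable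
      have sB3: "B3 \<in> sets game_space" unfolding B3_def by measurable
      have dN: "d * real N > 0" using d elim(1) by simp
      have mBad: "measure game_space Bad = 0" unfolding Bad_def by (rule null_bad)
      have m1: "measure game_space B1 \<le> (msq s0 + real S * (2 * real S)^2) / (d * real N)^4"
        unfolding B1_def S_def by (rule B1_bound) (use dN in \<open>simp only: zero_less_power\<close>)
      have m2: "measure game_space B2 \<le> real S / (d * real N)^2"
        unfolding B2_def by (rule B2_bound) (use dN d elim(1) in simp)
      have m3: "measure game_space B3 \<le> real j / (d * real N)^2"
        unfolding B3_def by (rule B2_bound) (use dN d elim(1) in simp)
      have jS: "real j \<le> real S" unfolding j_def by simp
      have m3': "measure game_space B3 \<le> real S / (d * real N)^2"
        using m3 divide_right_mono[OF jS, of "(d * real N)^2"] by simp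
      have "measure game_space A \<le> measure game_space (Bad \<union> B1 \<union> B2 \<union> B3)"
        by (rule G.finite_measure_mono[OF sub]) (intro sets.Un sBad sB1 sB2 sB3)
      also have "\<dots> \<le> measure game_space (Bad \<union> B1 \<union> B2) + measure game_space B3"
        by (rule measure_Un_le) (intro sets.Un sBad sB1 sB2 sB3)+
      also have "measure game_space (Bad \<union> B1 \<union> B2) \<le> measure game_space (Bad \<union> B1) + measure game_space B2"
        by (rule measure_Un_le) (intro sets.Un sBad sB1 sB2 sB3)+
      also have "measure game_space (Bad \<union> B1) \<le> measure game_space Bad + measure game_space B1"
        by (rule measure_Un_le) (intro sets.Un sBad sB1 sB2 sB3)+
      finally have "measure game_space A \<le> measure game_space Bad + measure game_space B1 + measure game_space B2 + measure game_space B3"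
        by simp
      also have "\<dots> \<le> 0 + (msq s0 + real S * (2 * real S)^2) / (d * real N)^4 + real S / (d * real N)^2 + real S / (d * real N)^2"
        using mBad m1 m2 m3' by linarith
      also have "\<dots> = f N" by (simp add: f_def S_def s0_def)
      finally show ?case by (simp add: A_def s0_def)
    qed
    have lower: "\<forall>\<^sub>F N in sequentially. 0 \<le> measure game_space
              {\<omega> \<in> space game_space. \<bar>ruin_time N (X0 N, Y0 N) \<omega> - (x0 + y0)\<bar> > \<epsilon>}"
      by simp
    show ?thesis by (rule tendsto_sandwich[OF lower bound tendsto_const lim])
  qed
  show ?thesis using ruin_meas part2 by blast
qed


end
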